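(* Assume $k_{+\infty}=k_{-\infty}$, that $k^2(x)>0$ for all $x$ (no classically forbidden region), and that $k=\sqrt{k^2}$ is twice continuously differentiable. Then $$T\ \ge\ \mathrm{sech}^2\left\{\frac12\int_{-\infty}^{\infty}\left|\frac{1}{\sqrt{k}}\left(\frac{1}{\sqrt{k}}\right)''\right|\mathrm{d}x\right\}.$$
   Context: Standing setup: $k^2:\mathbb{R}\to\mathbb{R}$ is a function with $k^2(x)\to k_{\pm\infty}^2$ as $x\to\pm\infty$, where $k_{\pm\infty}>0$ and $k^2-k_{\pm\infty}^2$ is integrable near $\pm\infty$. For the equation $u''+k^2(x)u=0$ there is a solution with $u(x)=e^{ik_{-\infty}x}+r\,e^{-ik_{-\infty}x}+o(1)$ as $x\to-\infty$ and $u(x)=\tau\,e^{ik_{+\infty}x}+o(1)$ as $x\to+\infty$; the transmission probability is $T=(k_{+\infty}/k_{-\infty})|\tau|^2$. Here $\mathrm{sech}=1/\cosh$, and if the integral equals $+\infty$ the bound is read as the trivial statement $T\ge 0$. *)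

theory Defs
  imports "HOL-Analysis.Analysis"
begin

definition sech :: "real \<Rightarrow> real" where
  "sech x = 1 / cosh x"

definition transmission :: "real \<Rightarrow> real \<Rightarrow> complex \<Rightarrow> real" where
  "transmission kp km \<tau> = (kp / km) * (cmod \<tau>)^2"

end

theory Submission
  imports Defs
begin


lemma conv_top:
  fixes G G' :: "real \<Rightarrow> complex"
  assumes d: "\<And>x. (G has_vector_derivative G' x) (at x)"
    and c: "continuous_on UNIV G'"
    and i: "set_integrable lborel {b..} G'"
  shows "\<exists>L. (G \<longlongrightarrow> L) at_top"
proof -
  have eq: "G x = G b + (LINT t:{b..x}|lborel. G' t)" if "x \<ge> b" for x
  proof -
    have "(G' has_integral (G x - G b)) {b..x}"
      using that d by (intro fundamental_theorem_of_calculus) (auto intro: has_vector_derivative_at_within)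
    moreover have "set_integrable lborel {b..x} G'"
      by (rule set_integrable_subset[OF i]) auto
    ultimately have "(LINT t:{b..x}|lborel. G' t) = G x - G b"
      using set_borel_integral_eq_integral(2) integral_unique by metis
    then show ?thesis by simp
  qed
  have "((\<lambda>x. G b + (LINT t:{b..x}|lborel. G' t)) \<longlongrightarrow> G b + (LINT t:{b..}|lborel. G' t)) at_top"
  proof -
    have "((\<lambda>x. LINT t:{b..x}|lborel. G' t) \<longlongrightarrow> (LINT t:{b..}|lborel. G' t)) at_top"
      by (rule tendsto_set_lebesgue_integral_at_top[OF _ i]) simp
    then show ?thesis by (intro tendsto_add tendsto_const)
  qed
  moreover have "eventually (\<lambda>x. G b + (LINT t:{b..x}|lborel. G' t) = G x) at_top"
    using eventually_ge_at_top[of b] by (rule eventually_mono) (rule eq[symmetric])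
  ultimately show ?thesis by (blast intro: Lim_transform_eventually)
qed

lemma conv_bot:
  fixes G G' :: "real \<Rightarrow> complex"
  assumes d: "\<And>x. (G has_vector_derivative G' x) (at x)"
    and c: "continuous_on UNIV G'"
    and i: "set_integrable lborel {..a} G'"
  shows "\<exists>L. (G \<longlongrightarrow> L) at_bot"
proof -
  have d2: "((\<lambda>x. G (-x)) has_vector_derivative (- G' (-x))) (at x)" for x
  proof -
    have "((G \<circ> uminus) has_vector_derivative ((-1) *\<^sub>R G' (-x))) (at x)"
      by (rule vector_diff_chain_at) (auto intro!: derivative_eq_intros d)
    then show ?thesis by (simp add: o_def)
  qed
  have c2: "continuous_on UNIV (\<lambda>x. - G' (-x))"
    by (intro continuous_intros continuous_on_compose2[OF c]) auto
  have "integrable lborel (\<lambda>x. indicator {..a} x *\<^sub>R G' x)"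
    using i by (simp add: set_integrable_def)
  then have "integrable lborel (\<lambda>x. (\<lambda>x. indicator {..a} x *\<^sub>R G' x) (0 + (-1) * x))"
    by (subst lborel_integrable_real_affine_iff) auto
  moreover have e: "\<And>x. (-x \<le> a) = (-a \<le> x)" by auto
  ultimately have "integrable lborel (\<lambda>x. - (indicator {-a..} x *\<^sub>R (- G' (-x))))"
    by (simp add: indicator_def e)
  then have i2: "set_integrable lborel {-a..} (\<lambda>x. - G' (-x))"
    unfolding set_integrable_def using integrable_minus[of lborel "\<lambda>x. - (indicator {-a..} x *\<^sub>R (- G' (-x)))"] by simp
  obtain L where "((\<lambda>x. G (-x)) \<longlongrightarrow> L) at_top"
    using conv_top[OF d2 c2 i2] by blast
  then show ?thesis using filterlim_at_bot_mirror by blast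
qed

lemma lin_indep_top:
  fixes A B :: complex and \<theta> :: real
  assumes "\<theta> > 0" and lim: "((\<lambda>x. A * exp (\<i> * complex_of_real (\<theta> * x)) + B * exp (- \<i> * complex_of_real (\<theta> * x))) \<longlongrightarrow> 0) at_top"
  shows "A = 0 \<and> B = 0"
proof -
  define f where "f = (\<lambda>x. A * exp (\<i> * complex_of_real (\<theta> * x)) + B * exp (- \<i> * complex_of_real (\<theta> * x)))"
  have key: "A * cis c + B * cis (-c) = 0" for c
  proof -
    define X where "X = (\<lambda>n::nat. c/\<theta> + (2*pi/\<theta>) * real n)"
    have "filterlim X at_top sequentially"
      unfolding X_def using assms(1)
      by (intro filterlim_tendsto_add_at_top[OF tendsto_const]
          filterlim_tendsto_pos_mult_at_top[OF tendsto_const _ filterlim_real_sequentially]) auto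
    then have "(\<lambda>n. f (X n)) \<longlonglongrightarrow> 0"
      using lim unfolding f_def by (rule filterlim_compose[rotated])
    moreover have "f (X n) = A * cis c + B * cis (-c)" for n
    proof -
      have t: "\<theta> * X n = 2 * pi * real n + c" using assms(1) by (simp add: X_def field_simps)
      have c1: "cis (2 * pi * real n + c) = cis c"
      proof -
        have "cis (2 * pi * real n + c) = cis (2 * pi * real n) * cis c" by (simp only: cis_mult)
        also have "cis (2 * pi * real n) = 1" by (rule cis_multiple_2pi) simp
        finally show ?thesis by simp
      qed
      have c2: "cis (- (2 * pi * real n + c)) = cis (-c)"
      proof -
        have "cis (- (2 * pi * real n + c)) = cis (2 * pi * (- real n)) * cis (-c)"
          by (simp only: cis_mult) simp
        also have "cis (2 * pi * (- real n)) = 1"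
          by (rule cis_multiple_2pi) simp
        finally show ?thesis by simp
      qed
      have "f (X n) = A * cis (\<theta> * X n) + B * cis (- (\<theta> * X n))"
        unfolding f_def cis_conv_exp by simp
      then show ?thesis using t c1 c2 by simp
    qed
    ultimately show ?thesis by (simp add: LIMSEQ_const_iff)
  qed
  have k0: "A + B = 0" using key[of 0] by simp
  have "\<i> * (A - B) = 0" using key[of "pi/2"] by (simp add: algebra_simps)
  then have "A - B = 0" by simp
  then have "A = B" by simp
  with k0 have "2 * A = 0" by simp
  with \<open>A = B\<close> show ?thesis by simp
qed


lemma normsq_deriv:
  fixes f :: "real \<Rightarrow> complex"
  assumes "(f has_vector_derivative f') (at x)"
  shows "((\<lambda>x. (cmod (f x))^2) has_real_derivative 2 * Re (cnj (f x) * f')) (at x)"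
proof -
  have "((\<lambda>x. f x * cnj (f x)) has_vector_derivative (f x * cnj f' + f' * cnj (f x))) (at x)"
    by (intro has_vector_derivative_mult has_vector_derivative_cnj assms)
  then have "((\<lambda>x. Re (f x * cnj (f x))) has_vector_derivative Re (f x * cnj f' + f' * cnj (f x))) (at x)"
    by (rule bounded_linear.has_vector_derivative[OF bounded_linear_Re])
  moreover have "Re (f x * cnj f' + f' * cnj (f x)) = 2 * Re (cnj (f x) * f')"
    by simp
  moreover have "\<And>z. Re (z * cnj z) = (cmod z)^2"
    by (metis Re_complex_of_real complex_norm_square)
  ultimately show ?thesis
    by (simp add: has_real_derivative_iff_has_vector_derivative mult.commute)
qed

lemma mono_exp:
  fixes f f' F h :: "real \<Rightarrow> real"
  assumes "\<And>x. (f has_real_derivative f' x) (at x)"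
    and "\<And>x. (F has_real_derivative h x) (at x)"
    and "\<And>x. f' x + h x * f x \<ge> 0" and "x \<le> y"
  shows "f x * exp (F x) \<le> f y * exp (F y)"
proof (rule DERIV_nonneg_imp_nondecreasing[OF \<open>x \<le> y\<close>])
  fix t
  have "((\<lambda>t. f t * exp (F t)) has_real_derivative (f' t * exp (F t) + f t * (exp (F t) * h t))) (at t)"
    by (rule derivative_eq_intros assms(1,2))+ auto
  moreover have "f' t * exp (F t) + f t * (exp (F t) * h t) = (f' t + h t * f t) * exp (F t)"
    by (simp add: algebra_simps)
  moreover have "(f' t + h t * f t) * exp (F t) \<ge> 0" using assms(3)[of t] by simp
  ultimately show "\<exists>y. ((\<lambda>t. f t * exp (F t)) has_real_derivative y) (at t) \<and> 0 \<le> y" by auto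
qed

lemma lin_indep_bot:
  fixes A B :: complex and \<theta> :: real
  assumes "\<theta> > 0" and lim: "((\<lambda>x. A * exp (\<i> * complex_of_real (\<theta> * x)) + B * exp (- \<i> * complex_of_real (\<theta> * x))) \<longlongrightarrow> 0) at_bot"
  shows "A = 0 \<and> B = 0"
proof -
  have "((\<lambda>x. A * exp (\<i> * complex_of_real (\<theta> * (-x))) + B * exp (- \<i> * complex_of_real (\<theta> * (-x)))) \<longlongrightarrow> 0) at_top"
    using filterlim_at_bot_mirror[THEN iffD1, OF lim] by simp
  then have "((\<lambda>x. B * exp (\<i> * complex_of_real (\<theta> * x)) + A * exp (- \<i> * complex_of_real (\<theta> * x))) \<longlongrightarrow> 0) at_top"
    by (simp add: add.commute)
  from lin_indep_top[OF assms(1) this] show ?thesis by simp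
qed




lemma aux_cs:
  fixes a b c m n :: real
  assumes "c^2 = a^2 + b^2" "c = m * n" "4 * (m * n)^2 \<le> (m^2 + n^2)^2"
  shows "16 * a^2 + (4 * b)^2 \<le> (2 * (m^2 + n^2))^2"
proof -
  have "16 * a^2 + (4 * b)^2 = 16 * (m * n)^2" using assms(1,2) by (simp add: power_mult_distrib)
  also have "\<dots> \<le> 4 * (m^2 + n^2)^2" using assms(3) by simp
  also have "\<dots> = (2 * (m^2 + n^2))^2" by (simp only: power_mult_distrib) simp
  finally show ?thesis .
qed

lemma cont_sbm:
  fixes f :: "real \<Rightarrow> 'b::{banach, second_countable_topology}"
  assumes "continuous_on UNIV f" "A \<in> sets lborel"
  shows "set_borel_measurable lborel A f"
  unfolding set_borel_measurable_def
  using borel_measurable_continuous_onI[OF assms(1)] assms(2)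
  by (intro borel_measurable_scaleR borel_measurable_indicator) auto

lemma sint_bound_cont:
  fixes g :: "real \<Rightarrow> 'b::{banach, second_countable_topology}" and h :: "real \<Rightarrow> real"
  assumes "set_integrable lborel A h" "continuous_on UNIV g" "A \<in> sets lborel"
    and "\<And>x. norm (g x) \<le> h x"
  shows "set_integrable lborel A g"
proof (rule set_integrable_bound[OF assms(1) cont_sbm[OF assms(2,3)]])
  show "AE x in lborel. x \<in> A \<longrightarrow> norm (g x) \<le> norm (h x)"
    using assms(4) by (auto intro!: AE_I2 order.trans[OF _ abs_ge_self])
qed

lemma exp_vd:
  fixes c :: real
  shows "((\<lambda>x. exp (\<i> * complex_of_real (c * x))) has_vector_derivative (\<i> * complex_of_real c * exp (\<i> * complex_of_real (c * x)))) (at x)"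
proof -
  have "((\<lambda>z. exp (\<i> * complex_of_real c * z)) has_field_derivative (exp (\<i> * complex_of_real c * complex_of_real x) * (\<i> * complex_of_real c))) (at (complex_of_real x))"
    by (auto intro!: derivative_eq_intros)
  from has_vector_derivative_real_field[OF this] show ?thesis
    by (simp add: mult.assoc mult.commute mult.left_commute)
qed

lemma tendsto_zero_mult_unit:
  fixes f g :: "real \<Rightarrow> complex"
  assumes "(f \<longlongrightarrow> 0) F" "\<And>x. cmod (g x) = 1"
  shows "((\<lambda>x. f x * g x) \<longlongrightarrow> 0) F"
proof -
  have "((\<lambda>x. cmod (f x)) \<longlongrightarrow> 0) F" using assms(1) by (simp add: tendsto_norm_zero_iff)
  then have "((\<lambda>x. cmod (f x * g x)) \<longlongrightarrow> 0) F" by (simp add: norm_mult assms(2))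
  then show ?thesis by (simp add: tendsto_norm_zero_iff)
qed

lemma ab_identities:
  fixes p P :: complex
  shows "(cmod (p - \<i> * P))^2 + (cmod (p + \<i> * P))^2 = 2 * ((cmod p)^2 + (cmod P)^2)"
    and "(cmod (p - \<i> * P))^2 - (cmod (p + \<i> * P))^2 = 4 * Im (cnj p * P)"
  unfolding cmod_power2 by (simp_all add: power2_eq_square algebra_simps)

lemma final_alg:
  fixes \<rho> I :: real
  assumes "\<rho> \<ge> 0" "1 + \<rho> \<le> (1 - \<rho>) * exp I"
  shows "(sech (I / 2))^2 \<le> 1 - \<rho>^2"
proof -
  define c where "c = exp (I / 2)"
  have c_pos: "c > 0" by (simp add: c_def)
  have eI: "exp I = c^2" unfolding c_def by (simp add: exp_double[symmetric] power2_eq_square exp_add[symmetric])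
  have ch: "cosh (I / 2) = (c + inverse c) / 2" unfolding c_def by (simp add: cosh_def exp_minus)
  define t where "t = (c^2 - 1) / (c^2 + 1)"
  have s1: "(sech (I / 2))^2 = 4 * c^2 / (c^2 + 1)^2"
    unfolding sech_def ch using c_pos by (simp add: field_simps power2_eq_square)
  have nz: "(c^2 + 1)^2 \<noteq> 0" by (smt (verit) zero_le_power2 power_not_zero)
  have "1 - t^2 = 1 - (c^2 - 1)^2 / (c^2 + 1)^2"
    unfolding t_def by (simp only: power_divide)
  also have "\<dots> = ((c^2 + 1)^2 - (c^2 - 1)^2) / (c^2 + 1)^2"
    using nz by (simp add: diff_divide_distrib)
  also have "(c^2 + 1)^2 - (c^2 - 1)^2 = 4 * c^2" by (simp add: power2_eq_square algebra_simps)
  finally have sech_eq: "(sech (I / 2))^2 = 1 - t^2" using s1 by simp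
  have "\<rho> * (c^2 + 1) \<le> c^2 - 1" using assms(2) unfolding eI by (simp add: algebra_simps)
  then have "\<rho> \<le> t" unfolding t_def using c_pos by (simp add: field_simps add_pos_pos)
  then have "\<rho>^2 \<le> t^2" using assms(1) by (intro power_mono) auto
  then show ?thesis using sech_eq by simp
qed

theorem mainTheorem10:
  fixes q :: "real \<Rightarrow> real" and km kp :: real
    and k' k'' :: "real \<Rightarrow> real"
    and u u' :: "real \<Rightarrow> complex" and r \<tau> :: complex
  assumes km_pos: "km > 0" and kp_pos: "kp > 0"
    and lim_bot: "(q \<longlongrightarrow> km^2) at_bot"
    and lim_top: "(q \<longlongrightarrow> kp^2) at_top"
    and int_bot: "\<exists>a. set_integrable lborel {..a} (\<lambda>x. q x - km^2)"
    and int_top: "\<exists>b. set_integrable lborel {b..} (\<lambda>x. q x - kp^2)"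
    and same: "kp = km"
    and q_pos: "\<And>x. q x > 0"
    and k_d1: "\<And>x. ((\<lambda>y. sqrt (q y)) has_real_derivative k' x) (at x)"
    and k_d2: "\<And>x. (k' has_real_derivative k'' x) (at x)"
    and k_C2: "continuous_on UNIV k''"
    and u_d1: "\<And>x. (u has_vector_derivative u' x) (at x)"
    and u_ode: "\<And>x. (u' has_vector_derivative (- complex_of_real (q x) * u x)) (at x)"
    and u_bot: "((\<lambda>x. u x - (exp (\<i> * complex_of_real (km * x))
                          + r * exp (- \<i> * complex_of_real (km * x)))) \<longlongrightarrow> 0) at_bot"
    and u_top: "((\<lambda>x. u x - \<tau> * exp (\<i> * complex_of_real (kp * x))) \<longlongrightarrow> 0) at_top"
  shows "let w = (\<lambda>x. 1 / sqrt (sqrt (q x)));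
             I = (\<integral>\<^sup>+ x. ennreal \<bar>w x * deriv (deriv w) x\<bar> \<partial>lborel)
         in I \<noteq> \<infinity> \<longrightarrow> transmission kp km \<tau> \<ge> (sech (enn2real I / 2))^2"
proof -
  define k where "k = (\<lambda>x. sqrt (q x))"
  define \<sigma> where "\<sigma> = (\<lambda>x. sqrt (k x))"
  define s1 where "s1 = (\<lambda>x. k' x / (2 * \<sigma> x))"
  define s2 where "s2 = (\<lambda>x. (k'' x * (2 * \<sigma> x) - k' x * (2 * s1 x)) / ((2 * \<sigma> x) * (2 * \<sigma> x)))"
  define V where "V = (\<lambda>x. 2 * s1 x ^ 2 / \<sigma> x ^ 4 - s2 x / \<sigma> x ^ 3)"
  have k_pos: "k x > 0" for x using q_pos[of x] by (simp add: k_def)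
  have \<sigma>_pos: "\<sigma> x > 0" for x using k_pos[of x] by (simp add: \<sigma>_def)
  have \<sigma>_nz: "\<sigma> x \<noteq> 0" for x using \<sigma>_pos[of x] by simp
  have q_eq: "q x = \<sigma> x ^ 4" for x
  proof -
    have "\<sigma> x ^ 4 = (\<sigma> x ^ 2) ^ 2" by simp
    also have "\<sigma> x ^ 2 = k x" using k_pos[of x] by (simp add: \<sigma>_def)
    also have "k x ^ 2 = q x" using q_pos[of x] by (simp add: k_def)
    finally show ?thesis ..
  qed
  have k_eq: "k x = \<sigma> x ^ 2" for x using k_pos[of x] by (simp add: \<sigma>_def)
  have kd: "(k has_real_derivative k' x) (at x)" for x
    using k_d1[of x] by (simp add: k_def)
  have k_cont: "continuous_on UNIV k" 
    by (metis DERIV_isCont continuous_at_imp_continuous_on kd)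
  have k'_cont: "continuous_on UNIV k'" 
    by (metis DERIV_isCont continuous_at_imp_continuous_on k_d2)
  have \<sigma>d: "(\<sigma> has_real_derivative s1 x) (at x)" for x
  proof -
    have "(\<sigma> has_real_derivative (inverse (sqrt (k x)) / 2 * k' x)) (at x)"
      unfolding \<sigma>_def using kd[of x] k_pos[of x]
      by (intro DERIV_chain2[OF DERIV_real_sqrt]) auto
    moreover have "inverse (sqrt (k x)) / 2 * k' x = s1 x" by (simp add: s1_def \<sigma>_def field_simps)
    ultimately show ?thesis by simp
  qed
  have \<sigma>_cont: "continuous_on UNIV \<sigma>" 
    by (metis DERIV_isCont continuous_at_imp_continuous_on \<sigma>d)
  have s1d: "(s1 has_real_derivative s2 x) (at x)" for x
  proof -
    have "((\<lambda>x. k' x / (2 * \<sigma> x)) has_real_derivative s2 x) (at x)"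
      unfolding s2_def using \<sigma>_pos[of x]
      by (intro DERIV_divide k_d2 DERIV_cmult \<sigma>d) auto
    then show ?thesis by (simp only: s1_def)
  qed
  have s1_cont: "continuous_on UNIV s1" 
    by (metis DERIV_isCont continuous_at_imp_continuous_on s1d)
  have s2_cont: "continuous_on UNIV s2"
    unfolding s2_def using \<sigma>_pos
    by (intro continuous_intros k_C2 \<sigma>_cont s1_cont k'_cont) (auto simp: \<sigma>_nz)
  have V_cont: "continuous_on UNIV V"
    unfolding V_def using \<sigma>_pos
    by (intro continuous_intros \<sigma>_cont s1_cont s2_cont) (auto simp: \<sigma>_nz)
  define w where "w = (\<lambda>x. 1 / sqrt (sqrt (q x)))"
  have w_eq: "w = (\<lambda>x. 1 / \<sigma> x)" by (simp add: w_def \<sigma>_def k_def)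
  define w1 where "w1 = (\<lambda>x. - (s1 x / (\<sigma> x * \<sigma> x)))"
  have wd: "(w has_real_derivative w1 x) (at x)" for x
  proof -
    have "((\<lambda>x. 1 / \<sigma> x) has_real_derivative (0 * \<sigma> x - 1 * s1 x) / (\<sigma> x * \<sigma> x)) (at x)"
      using \<sigma>_pos[of x] by (intro DERIV_divide DERIV_const \<sigma>d) auto
    then show ?thesis by (simp add: w_eq w1_def)
  qed
  have deriv_w: "deriv w = w1" using wd by (intro ext DERIV_imp_deriv) 
  define s3 where "s3 = (\<lambda>x. (s2 x * (\<sigma> x * \<sigma> x) - s1 x * (s1 x * \<sigma> x + s1 x * \<sigma> x)) / ((\<sigma> x * \<sigma> x) * (\<sigma> x * \<sigma> x)))"
  have s1\<sigma>d: "((\<lambda>x. s1 x / (\<sigma> x * \<sigma> x)) has_real_derivative s3 x) (at x)" for x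
    unfolding s3_def using \<sigma>_pos[of x]
    by (intro DERIV_divide[OF s1d DERIV_mult[OF \<sigma>d \<sigma>d]]) auto
  define w2 where "w2 = (\<lambda>x. - s3 x)"
  have w1d: "(w1 has_real_derivative w2 x) (at x)" for x
    unfolding w1_def w2_def by (rule DERIV_minus[OF s1\<sigma>d])
  have deriv_w1: "deriv w1 = w2" using w1d by (intro ext DERIV_imp_deriv) 
  have wV: "w x * deriv (deriv w) x = V x" for x
    unfolding deriv_w deriv_w1 using \<sigma>_pos[of x] by (simp add: w_eq w2_def s3_def V_def field_simps power2_eq_square power4_eq_xxxx power3_eq_cube)
  define c1 where "c1 = (\<lambda>x. 1 / \<sigma> x)"
  define c2 where "c2 = (\<lambda>x. s1 x / (\<sigma> x * \<sigma> x))"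
  have c1d: "(c1 has_real_derivative w1 x) (at x)" for x
    using wd by (simp add: w_eq c1_def)
  have c2d: "(c2 has_real_derivative s3 x) (at x)" for x
    using s1\<sigma>d by (simp add: c2_def)
  define p where "p = (\<lambda>x. complex_of_real (\<sigma> x) * u x)"
  define P where "P = (\<lambda>x. complex_of_real (c1 x) * u' x + complex_of_real (c2 x) * u x)"
  have pd: "(p has_vector_derivative (complex_of_real (k x) * P x)) (at x)" for x
  proof -
    have "(p has_vector_derivative (complex_of_real (\<sigma> x) * u' x + complex_of_real (s1 x) * u x)) (at x)"
      unfolding p_def by (intro derivative_eq_intros) (auto intro: u_d1 \<sigma>d)
    moreover have "complex_of_real (\<sigma> x) * u' x + complex_of_real (s1 x) * u x = complex_of_real (k x) * P x"
      using \<sigma>_pos[of x] by (simp add: P_def c1_def c2_def k_eq field_simps power2_eq_square)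
    ultimately show ?thesis by simp
  qed
  have Pd: "(P has_vector_derivative (- complex_of_real (k x + V x) * p x)) (at x)" for x
  proof -
    have "(P has_vector_derivative (complex_of_real (c1 x) * (- complex_of_real (q x) * u x) + complex_of_real (w1 x) * u' x
         + (complex_of_real (c2 x) * u' x + complex_of_real (s3 x) * u x))) (at x)"
      unfolding P_def by (intro derivative_eq_intros) (auto intro: u_d1 u_ode c1d c2d)
    moreover have "complex_of_real (c1 x) * (- complex_of_real (q x) * u x) + complex_of_real (w1 x) * u' x
         + (complex_of_real (c2 x) * u' x + complex_of_real (s3 x) * u x) = - complex_of_real (k x + V x) * p x"
      using \<sigma>_pos[of x] by (simp add: p_def c1_def c2_def w1_def s3_def V_def k_eq q_eq field_simps power2_eq_square power4_eq_xxxx power3_eq_cube)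
    ultimately show ?thesis by simp
  qed
  have p_cont: "continuous_on UNIV p"
    by (intro continuous_at_imp_continuous_on ballI has_vector_derivative_continuous[OF pd])
  have P_cont: "continuous_on UNIV P"
    by (intro continuous_at_imp_continuous_on ballI has_vector_derivative_continuous[OF Pd])
  define R where "R = (\<lambda>x. Re (cnj (p x) * P x))"
  define S where "S = (\<lambda>x. 2 * ((cmod (p x))^2 + (cmod (P x))^2))"
  define D where "D = (\<lambda>x. 4 * Im (cnj (p x) * P x))"
  have Sd: "(S has_real_derivative (- 4 * V x * R x)) (at x)" for x
  proof -
    have "(S has_real_derivative 2 * (2 * Re (cnj (p x) * (complex_of_real (k x) * P x)) + 2 * Re (cnj (P x) * (- complex_of_real (k x + V x) * p x)))) (at x)"
      unfolding S_def by (intro DERIV_cmult DERIV_add normsq_deriv pd Pd)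
    moreover have "2 * (2 * Re (cnj (p x) * (complex_of_real (k x) * P x)) + 2 * Re (cnj (P x) * (- complex_of_real (k x + V x) * p x))) = - 4 * V x * R x"
      by (simp add: R_def algebra_simps)
    ultimately show ?thesis by simp
  qed
  have Dd: "(D has_real_derivative 0) (at x)" for x
  proof -
    have "((\<lambda>x. cnj (p x) * P x) has_vector_derivative (cnj (p x) * (- complex_of_real (k x + V x) * p x) + cnj (complex_of_real (k x) * P x) * P x)) (at x)"
      by (intro has_vector_derivative_mult has_vector_derivative_cnj pd Pd)
    then have "((\<lambda>x. Im (cnj (p x) * P x)) has_vector_derivative Im (cnj (p x) * (- complex_of_real (k x + V x) * p x) + cnj (complex_of_real (k x) * P x) * P x)) (at x)"
      by (rule bounded_linear.has_vector_derivative[OF bounded_linear_Im])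
    moreover have "Im (cnj (p x) * (- complex_of_real (k x + V x) * p x) + cnj (complex_of_real (k x) * P x) * P x) = 0"
      by (simp add: algebra_simps)
    ultimately have "((\<lambda>x. Im (cnj (p x) * P x)) has_real_derivative 0) (at x)"
      by (simp add: has_real_derivative_iff_has_vector_derivative)
    from DERIV_cmult[OF this, of 4] show ?thesis unfolding D_def by (simp only: mult_zero_right)
  qed
  define D0 where "D0 = D 0"
  have D_const: "D x = D0" for x unfolding D0_def using Dd by (intro DERIV_isconst_all) auto
  have CS: "16 * (R x)^2 + (D x)^2 \<le> (S x)^2" for x
  proof -
    have e1: "(cmod (cnj (p x) * P x))^2 = (R x)^2 + (Im (cnj (p x) * P x))^2"
      unfolding R_def by (rule cmod_power2)
    have e2: "cmod (cnj (p x) * P x) = cmod (p x) * cmod (P x)" by (metis complex_mod_cnj norm_mult)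
    have e3: "4 * ((cmod (p x)) * cmod (P x))^2 \<le> ((cmod (p x))^2 + (cmod (P x))^2)^2"
    proof -
      have "((cmod (p x))^2 + (cmod (P x))^2)^2 - 4 * ((cmod (p x)) * cmod (P x))^2 = ((cmod (p x))^2 - (cmod (P x))^2)^2"
        by (simp add: power2_eq_square algebra_simps)
      then show ?thesis using zero_le_power2[of "(cmod (p x))^2 - (cmod (P x))^2"] by linarith
    qed
    show ?thesis unfolding D_def S_def using aux_cs[OF e1 e2 e3] .
  qed
  have S_nonneg: "S x \<ge> 0" for x by (simp add: S_def)
  have S_ge_D: "(D x)^2 \<le> (S x)^2" for x using CS[of x] by (smt (verit) zero_le_power2)
  have Sd_bound: "\<bar>- 4 * V x * R x\<bar> \<le> \<bar>V x\<bar> * sqrt ((S x)^2 - (D x)^2)" for x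
  proof -
    have "(4 * \<bar>R x\<bar>)^2 \<le> (S x)^2 - (D x)^2" using CS[of x] by (simp add: power_mult_distrib)
    then have "4 * \<bar>R x\<bar> \<le> sqrt ((S x)^2 - (D x)^2)" by (rule real_le_rsqrt)
    then have "\<bar>V x\<bar> * (4 * \<bar>R x\<bar>) \<le> \<bar>V x\<bar> * sqrt ((S x)^2 - (D x)^2)" by (rule mult_left_mono) simp
    then show ?thesis by (simp add: abs_mult algebra_simps)
  qed
  have V_meas: "V \<in> borel_measurable lborel"
    using borel_measurable_continuous_onI[OF V_cont] by simp
  have I_eq: "(\<integral>\<^sup>+ x. ennreal \<bar>1 / sqrt (sqrt (q x)) * deriv (deriv (\<lambda>x. 1 / sqrt (sqrt (q x)))) x\<bar> \<partial>lborel)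
     = (\<integral>\<^sup>+ x. ennreal \<bar>V x\<bar> \<partial>lborel)"
    using wV unfolding w_def by simp
  show ?thesis unfolding Let_def I_eq
  proof (intro impI)
    assume fin: "(\<integral>\<^sup>+ x. ennreal \<bar>V x\<bar> \<partial>lborel) \<noteq> \<infinity>"
    define I where "I = enn2real (\<integral>\<^sup>+ x. ennreal \<bar>V x\<bar> \<partial>lborel)"
    have I_ennreal: "(\<integral>\<^sup>+ x. ennreal \<bar>V x\<bar> \<partial>lborel) = ennreal I"
      using fin unfolding I_def by (simp add: less_top)
    have I_nonneg: "I \<ge> 0" by (simp add: I_def)
    have V_int: "integrable lborel V"
      using V_meas fin by (intro integrableI_bounded) (auto simp: less_top)
    have V_sint: "set_integrable lborel A V" if "A \<in> sets lborel" for A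
      unfolding set_integrable_def using that V_int by (rule integrable_mult_indicator)
    have aV_cont: "continuous_on UNIV (\<lambda>x. \<bar>V x\<bar>)" by (intro continuous_intros V_cont)
    have aV_isCont: "isCont (\<lambda>x. \<bar>V x\<bar>) x" for x
      using aV_cont by (simp add: continuous_on_eq_continuous_at)
    obtain F where Fd0: "\<And>x. (F has_vector_derivative \<bar>V x\<bar>) (at x)"
      using einterval_antiderivative[of "-\<infinity>" "\<infinity>" "\<lambda>x. \<bar>V x\<bar>"] aV_isCont by auto
    have Fd: "(F has_real_derivative \<bar>V x\<bar>) (at x)" for x
      using Fd0[of x] by (simp add: has_real_derivative_iff_has_vector_derivative)
    have F_bound: "F y - F x \<le> I" if "x \<le> y" for x y
    proof -
      have "((\<lambda>t. \<bar>V t\<bar>) has_integral (F y - F x)) {x..y}"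
        using that Fd0 by (intro fundamental_theorem_of_calculus) (auto intro: has_vector_derivative_at_within)
      then have "(\<integral>\<^sup>+ t. indicator {x..y} t * \<bar>V t\<bar> \<partial>lborel) = ennreal (F y - F x)"
        by (intro nn_integral_has_integral_lebesgue) auto
      moreover have "(\<integral>\<^sup>+ t. indicator {x..y} t * \<bar>V t\<bar> \<partial>lborel) \<le> (\<integral>\<^sup>+ t. ennreal \<bar>V t\<bar> \<partial>lborel)"
        by (intro nn_integral_mono) (auto simp: indicator_def)
      ultimately have "ennreal (F y - F x) \<le> ennreal I" using I_ennreal by simp
      then show ?thesis using I_nonneg by (simp add: ennreal_le_iff2) linarith
    qed
    have sqrt_le_S: "sqrt ((S x)^2 - (D x)^2) \<le> S x" for x
      using S_nonneg[of x] real_sqrt_le_mono[of "(S x)^2 - (D x)^2" "(S x)^2"] by simp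
    have absVR: "\<bar>4 * V x * R x\<bar> \<le> \<bar>V x\<bar> * S x" for x
    proof -
      have "\<bar>V x\<bar> * sqrt ((S x)^2 - (D x)^2) \<le> \<bar>V x\<bar> * S x"
        by (rule mult_left_mono[OF sqrt_le_S]) simp
      with Sd_bound[of x] show ?thesis by simp
    qed
    define Mb where "Mb = S 0 * exp I"
    have S_bound: "S x \<le> Mb" for x
    proof (cases "x \<le> 0")
      case True
      have "S x * exp (F x) \<le> S 0 * exp (F 0)"
      proof (rule mono_exp[OF Sd Fd _ True])
        fix t show "- 4 * V t * R t + \<bar>V t\<bar> * S t \<ge> 0" using absVR[of t] by linarith
      qed
      then have "S x \<le> S 0 * exp (F 0 - F x)" by (simp add: exp_diff field_simps)
      also have "\<dots> \<le> S 0 * exp I"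
        using F_bound[OF True] S_nonneg[of 0] by (intro mult_left_mono) auto
      finally show ?thesis by (simp add: Mb_def)
    next
      case False
      have Sd': "((\<lambda>x. - S x) has_real_derivative (4 * V x * R x)) (at x)" for x
        using DERIV_minus[OF Sd[of x]] by simp
      have Fd': "((\<lambda>x. - F x) has_real_derivative (- \<bar>V x\<bar>)) (at x)" for x
        using DERIV_minus[OF Fd[of x]] by simp
      have "- S 0 * exp (- F 0) \<le> - S x * exp (- F x)"
      proof (rule mono_exp[OF Sd' Fd'])
        fix t show "4 * V t * R t + - \<bar>V t\<bar> * - S t \<ge> 0" using absVR[of t] by linarith
      qed (use False in auto)
      then have "S x \<le> S 0 * exp (F x - F 0)" by (simp add: exp_diff exp_minus field_simps)
      also have "\<dots> \<le> S 0 * exp I"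
        using F_bound[of 0 x] False S_nonneg[of 0] by (intro mult_left_mono) auto
      finally show ?thesis by (simp add: Mb_def)
    qed
    define Bd where "Bd = sqrt Mb"
    have p_bound: "cmod (p x) \<le> Bd" for x
    proof -
      have "(cmod (p x))^2 \<le> Mb" using S_bound[of x] unfolding S_def by (smt (verit) zero_le_power2)
      then show ?thesis unfolding Bd_def by (rule real_le_rsqrt)
    qed
    have P_bound: "cmod (P x) \<le> Bd" for x
    proof -
      have "(cmod (P x))^2 \<le> Mb" using S_bound[of x] unfolding S_def by (smt (verit) zero_le_power2)
      then show ?thesis unfolding Bd_def by (rule real_le_rsqrt)
    qed
    have kkm: "\<bar>k x - km\<bar> \<le> \<bar>q x - km^2\<bar> / km" for x
    proof -
      have "q x - km^2 = (k x - km) * (k x + km)" using q_pos[of x] by (simp add: k_def algebra_simps power2_eq_square)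
      then have "\<bar>q x - km^2\<bar> = \<bar>k x - km\<bar> * (k x + km)" using k_pos[of x] km_pos by (simp add: abs_mult)
      moreover have "\<bar>k x - km\<bar> * km \<le> \<bar>k x - km\<bar> * (k x + km)" using k_pos[of x] by (intro mult_left_mono) auto
      ultimately show ?thesis using km_pos by (simp add: field_simps)
    qed
    have kcont2: "continuous_on UNIV (\<lambda>x. k x - km)" by (intro continuous_intros k_cont)
    have km_int: "set_integrable lborel A (\<lambda>x. k x - km)" if A: "set_integrable lborel A (\<lambda>x. q x - km^2)" "A \<in> sets lborel" for A
    proof (rule sint_bound_cont[OF _ kcont2 A(2)])
      show "set_integrable lborel A (\<lambda>x. \<bar>q x - km^2\<bar> / km)"
        using A(1) by (intro set_integrable_divide set_integrable_abs) auto
      show "norm (k x - km) \<le> \<bar>q x - km^2\<bar> / km" for x using kkm[of x] by simp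
    qed
    define E where "E = (\<lambda>x. exp (\<i> * complex_of_real (km * x)))"
    define Ec where "Ec = (\<lambda>x. exp (\<i> * complex_of_real ((-km) * x)))"
    have Ed: "(E has_vector_derivative (\<i> * complex_of_real km * E x)) (at x)" for x
      unfolding E_def by (rule exp_vd)
    have Ecd: "(Ec has_vector_derivative (\<i> * complex_of_real (-km) * Ec x)) (at x)" for x
      unfolding Ec_def by (rule exp_vd)
    have E_cont: "continuous_on UNIV E" unfolding E_def by (intro continuous_intros)
    have Ec_cont: "continuous_on UNIV Ec" unfolding Ec_def by (intro continuous_intros)
    have normE: "cmod (E x) = 1" for x unfolding E_def by simp
    have normEc: "cmod (Ec x) = 1" for x unfolding Ec_def by simp
    define \<alpha> where "\<alpha> = (\<lambda>x. p x - \<i> * P x)"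
    define \<beta> where "\<beta> = (\<lambda>x. p x + \<i> * P x)"
    define G1 where "G1 = (\<lambda>x. \<beta> x * E x)"
    define G2 where "G2 = (\<lambda>x. \<alpha> x * Ec x)"
    define G1' where "G1' = (\<lambda>x. (complex_of_real (k x - km) * P x - \<i> * complex_of_real (k x - km + V x) * p x) * E x)"
    define G2' where "G2' = (\<lambda>x. (complex_of_real (k x - km) * P x + \<i> * complex_of_real (k x - km + V x) * p x) * Ec x)"
    have G1d: "(G1 has_vector_derivative G1' x) (at x)" for x
    proof -
      have "(G1 has_vector_derivative ((p x + \<i> * P x) * (\<i> * complex_of_real km * E x) + (complex_of_real (k x) * P x + \<i> * (- complex_of_real (k x + V x) * p x)) * E x)) (at x)"
        unfolding G1_def \<beta>_def
        by (rule has_vector_derivative_mult[OF has_vector_derivative_add[OF pd has_vector_derivative_mult_right[OF Pd]] Ed])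
      moreover have "(p x + \<i> * P x) * (\<i> * complex_of_real km * E x) + (complex_of_real (k x) * P x + \<i> * (- complex_of_real (k x + V x) * p x)) * E x = G1' x"
        unfolding G1'_def by (simp add: algebra_simps)
      ultimately show ?thesis by simp
    qed
    have G2d: "(G2 has_vector_derivative G2' x) (at x)" for x
    proof -
      have "(G2 has_vector_derivative ((p x - \<i> * P x) * (\<i> * complex_of_real (-km) * Ec x) + (complex_of_real (k x) * P x - \<i> * (- complex_of_real (k x + V x) * p x)) * Ec x)) (at x)"
        unfolding G2_def \<alpha>_def
        by (rule has_vector_derivative_mult[OF has_vector_derivative_diff[OF pd has_vector_derivative_mult_right[OF Pd]] Ecd])
      moreover have "(p x - \<i> * P x) * (\<i> * complex_of_real (-km) * Ec x) + (complex_of_real (k x) * P x - \<i> * (- complex_of_real (k x + V x) * p x)) * Ec x = G2' x"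
        unfolding G2'_def by (simp add: algebra_simps)
      ultimately show ?thesis by simp
    qed
    have G1'_cont: "continuous_on UNIV G1'"
      unfolding G1'_def by (intro continuous_intros k_cont V_cont p_cont P_cont E_cont)
    have G2'_cont: "continuous_on UNIV G2'"
      unfolding G2'_def by (intro continuous_intros k_cont V_cont p_cont P_cont Ec_cont)
    define h where "h = (\<lambda>x. 2 * Bd * \<bar>k x - km\<bar> + Bd * \<bar>V x\<bar>)"
    have h_int: "set_integrable lborel A h" if A: "set_integrable lborel A (\<lambda>x. q x - km^2)" "A \<in> sets lborel" for A
      unfolding h_def using km_int[OF A] V_sint[OF A(2)]
      by (intro set_integral_add(1) set_integrable_mult_right set_integrable_abs) auto
    have G1'_bound: "cmod (G1' x) \<le> h x" for x
    proof -
      have "cmod (G1' x) \<le> \<bar>k x - km\<bar> * cmod (P x) + \<bar>k x - km + V x\<bar> * cmod (p x)"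
      proof -
        have "cmod (G1' x) = cmod (complex_of_real (k x - km) * P x - \<i> * complex_of_real (k x - km + V x) * p x)"
          unfolding G1'_def using normE[of x] by (simp only: norm_mult)
        also have "\<dots> \<le> cmod (complex_of_real (k x - km) * P x) + cmod (\<i> * complex_of_real (k x - km + V x) * p x)"
          by (rule norm_triangle_ineq4)
        also have "\<dots> = \<bar>k x - km\<bar> * cmod (P x) + \<bar>k x - km + V x\<bar> * cmod (p x)"
          by (simp only: norm_mult norm_of_real norm_ii mult_1_left)
        finally show ?thesis .
      qed
      also have "\<dots> \<le> \<bar>k x - km\<bar> * Bd + (\<bar>k x - km\<bar> + \<bar>V x\<bar>) * Bd"
        by (intro add_mono mult_mono P_bound p_bound) auto
      finally show ?thesis by (simp add: h_def algebra_simps)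
    qed
    have G2'_bound: "cmod (G2' x) \<le> h x" for x
    proof -
      have "cmod (G2' x) \<le> \<bar>k x - km\<bar> * cmod (P x) + \<bar>k x - km + V x\<bar> * cmod (p x)"
      proof -
        have "cmod (G2' x) = cmod (complex_of_real (k x - km) * P x + \<i> * complex_of_real (k x - km + V x) * p x)"
          unfolding G2'_def using normEc[of x] by (simp only: norm_mult)
        also have "\<dots> \<le> cmod (complex_of_real (k x - km) * P x) + cmod (\<i> * complex_of_real (k x - km + V x) * p x)"
          by (rule norm_triangle_ineq)
        also have "\<dots> = \<bar>k x - km\<bar> * cmod (P x) + \<bar>k x - km + V x\<bar> * cmod (p x)"
          by (simp only: norm_mult norm_of_real norm_ii mult_1_left)
        finally show ?thesis .
      qed
      also have "\<dots> \<le> \<bar>k x - km\<bar> * Bd + (\<bar>k x - km\<bar> + \<bar>V x\<bar>) * Bd"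
        by (intro add_mono mult_mono P_bound p_bound) auto
      finally show ?thesis by (simp add: h_def algebra_simps)
    qed
    obtain b where b: "set_integrable lborel {b..} (\<lambda>x. q x - km^2)" using int_top same by auto
    obtain a where a: "set_integrable lborel {..a} (\<lambda>x. q x - km^2)" using int_bot by auto
    obtain L1 where L1: "(G1 \<longlongrightarrow> L1) at_top"
      using conv_top[OF G1d G1'_cont sint_bound_cont[OF h_int[OF b] G1'_cont _ G1'_bound]] by auto
    obtain L2 where L2: "(G2 \<longlongrightarrow> L2) at_top"
      using conv_top[OF G2d G2'_cont sint_bound_cont[OF h_int[OF b] G2'_cont _ G2'_bound]] by auto
    obtain L3 where L3: "(G1 \<longlongrightarrow> L3) at_bot"
      using conv_bot[OF G1d G1'_cont sint_bound_cont[OF h_int[OF a] G1'_cont _ G1'_bound]] by auto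
    obtain L4 where L4: "(G2 \<longlongrightarrow> L4) at_bot"
      using conv_bot[OF G2d G2'_cont sint_bound_cont[OF h_int[OF a] G2'_cont _ G2'_bound]] by auto
    have q_top: "(q \<longlongrightarrow> km^2) at_top" using lim_top same by simp
    have \<sigma>_top: "(\<sigma> \<longlongrightarrow> sqrt km) at_top"
    proof -
      have "((\<lambda>x. sqrt (sqrt (q x))) \<longlongrightarrow> sqrt (sqrt (km^2))) at_top"
        by (intro tendsto_real_sqrt q_top)
      then show ?thesis using km_pos by (simp add: \<sigma>_def k_def)
    qed
    have \<sigma>_bot: "(\<sigma> \<longlongrightarrow> sqrt km) at_bot"
    proof -
      have "((\<lambda>x. sqrt (sqrt (q x))) \<longlongrightarrow> sqrt (sqrt (km^2))) at_bot"
        by (intro tendsto_real_sqrt lim_bot)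
      then show ?thesis using km_pos by (simp add: \<sigma>_def k_def)
    qed
    have EEc: "E x * Ec x = 1" for x unfolding E_def Ec_def by (simp add: exp_add[symmetric])
    have p_eq: "p x = (G2 x * E x + G1 x * Ec x) / 2" for x
    proof -
      have "G2 x * E x + G1 x * Ec x = \<alpha> x + \<beta> x"
      proof -
        have "G2 x * E x + G1 x * Ec x = (E x * Ec x) * (\<alpha> x + \<beta> x)"
          unfolding G1_def G2_def by (simp add: algebra_simps)
        then show ?thesis using EEc[of x] by simp
      qed
      then show ?thesis by (simp add: \<alpha>_def \<beta>_def)
    qed
    have E_app: "exp (\<i> * complex_of_real (km * x)) = E x" for x by (simp add: E_def)
    have Ec_eq: "Ec x = exp (- \<i> * complex_of_real (km * x))" for x by (simp add: Ec_def)
    have u_top': "((\<lambda>x. u x - \<tau> * E x) \<longlongrightarrow> 0) at_top" using u_top same by (simp add: E_def)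
    have p_top: "((\<lambda>x. p x - complex_of_real (sqrt km) * \<tau> * E x) \<longlongrightarrow> 0) at_top"
    proof -
      have t1: "((\<lambda>x. complex_of_real (\<sigma> x) * (u x - \<tau> * E x)) \<longlongrightarrow> complex_of_real (sqrt km) * 0) at_top"
        by (intro tendsto_mult tendsto_of_real \<sigma>_top u_top')
      have t2: "((\<lambda>x. complex_of_real (\<sigma> x - sqrt km) * \<tau> * E x) \<longlongrightarrow> 0) at_top"
      proof (rule tendsto_zero_mult_unit[OF _ normE])
        have "((\<lambda>x. complex_of_real (\<sigma> x - sqrt km)) \<longlongrightarrow> complex_of_real (sqrt km - sqrt km)) at_top"
          by (intro tendsto_of_real tendsto_diff \<sigma>_top tendsto_const)
        then have "((\<lambda>x. complex_of_real (\<sigma> x - sqrt km) * \<tau>) \<longlongrightarrow> complex_of_real (sqrt km - sqrt km) * \<tau>) at_top"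
          by (intro tendsto_mult tendsto_const)
        then show "((\<lambda>x. complex_of_real (\<sigma> x - sqrt km) * \<tau>) \<longlongrightarrow> 0) at_top" by simp
      qed
      have "((\<lambda>x. complex_of_real (\<sigma> x) * (u x - \<tau> * E x) + complex_of_real (\<sigma> x - sqrt km) * \<tau> * E x) \<longlongrightarrow> 0 + 0) at_top"
        using t1 t2 by (intro tendsto_add) auto
      moreover have "complex_of_real (\<sigma> x) * (u x - \<tau> * E x) + complex_of_real (\<sigma> x - sqrt km) * \<tau> * E x = p x - complex_of_real (sqrt km) * \<tau> * E x" for x
        by (simp add: p_def algebra_simps)
      ultimately show ?thesis by simp
    qed
    have Z_top: "((\<lambda>x. (L2 / 2 - complex_of_real (sqrt km) * \<tau>) * exp (\<i> * complex_of_real (km * x)) + (L1 / 2) * exp (- \<i> * complex_of_real (km * x))) \<longlongrightarrow> 0) at_top"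
    proof -
      have a1: "((\<lambda>x. ((L2 - G2 x) / 2) * E x) \<longlongrightarrow> 0) at_top"
        using L2 by (intro tendsto_zero_mult_unit[OF _ normE]) (auto intro!: tendsto_eq_intros)
      have a2: "((\<lambda>x. ((L1 - G1 x) / 2) * Ec x) \<longlongrightarrow> 0) at_top"
        using L1 by (intro tendsto_zero_mult_unit[OF _ normEc]) (auto intro!: tendsto_eq_intros)
      have "((\<lambda>x. ((L2 - G2 x) / 2) * E x + ((L1 - G1 x) / 2) * Ec x + (p x - complex_of_real (sqrt km) * \<tau> * E x)) \<longlongrightarrow> 0 + 0 + 0) at_top"
        by (intro tendsto_add a1 a2 p_top)
      moreover have "((L2 - G2 x) / 2) * E x + ((L1 - G1 x) / 2) * Ec x + (p x - complex_of_real (sqrt km) * \<tau> * E x)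
          = (L2 / 2 - complex_of_real (sqrt km) * \<tau>) * exp (\<i> * complex_of_real (km * x)) + (L1 / 2) * exp (- \<i> * complex_of_real (km * x))" for x
        unfolding p_eq Ec_eq[symmetric] E_app by (simp add: field_simps)
      ultimately show ?thesis by simp
    qed
    from lin_indep_top[OF km_pos Z_top] have L2v: "L2 = 2 * complex_of_real (sqrt km) * \<tau>" and L1v: "L1 = 0"
      by auto
    have u_bot': "((\<lambda>x. u x - (E x + r * Ec x)) \<longlongrightarrow> 0) at_bot" using u_bot unfolding E_app Ec_eq[symmetric] .
    have p_bot: "((\<lambda>x. p x - complex_of_real (sqrt km) * (E x + r * Ec x)) \<longlongrightarrow> 0) at_bot"
    proof -
      have t1: "((\<lambda>x. complex_of_real (\<sigma> x) * (u x - (E x + r * Ec x))) \<longlongrightarrow> complex_of_real (sqrt km) * 0) at_bot"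
        by (intro tendsto_mult tendsto_of_real \<sigma>_bot u_bot')
      have s0: "((\<lambda>x. complex_of_real (\<sigma> x - sqrt km)) \<longlongrightarrow> 0) at_bot"
      proof -
        have "((\<lambda>x. complex_of_real (\<sigma> x - sqrt km)) \<longlongrightarrow> complex_of_real (sqrt km - sqrt km)) at_bot"
          by (intro tendsto_of_real tendsto_diff \<sigma>_bot tendsto_const)
        then show ?thesis by simp
      qed
      have t2: "((\<lambda>x. complex_of_real (\<sigma> x - sqrt km) * E x) \<longlongrightarrow> 0) at_bot"
        by (rule tendsto_zero_mult_unit[OF s0 normE])
      have t3: "((\<lambda>x. (complex_of_real (\<sigma> x - sqrt km) * r) * Ec x) \<longlongrightarrow> 0) at_bot"
      proof (rule tendsto_zero_mult_unit[OF _ normEc])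
        have "((\<lambda>x. complex_of_real (\<sigma> x - sqrt km) * r) \<longlongrightarrow> 0 * r) at_bot"
          by (intro tendsto_mult s0 tendsto_const)
        then show "((\<lambda>x. complex_of_real (\<sigma> x - sqrt km) * r) \<longlongrightarrow> 0) at_bot" by simp
      qed
      have "((\<lambda>x. complex_of_real (\<sigma> x) * (u x - (E x + r * Ec x)) + complex_of_real (\<sigma> x - sqrt km) * E x + (complex_of_real (\<sigma> x - sqrt km) * r) * Ec x) \<longlongrightarrow> 0 + 0 + 0) at_bot"
        using t1 t2 t3 by (intro tendsto_add) auto
      moreover have "complex_of_real (\<sigma> x) * (u x - (E x + r * Ec x)) + complex_of_real (\<sigma> x - sqrt km) * E x + (complex_of_real (\<sigma> x - sqrt km) * r) * Ec x
          = p x - complex_of_real (sqrt km) * (E x + r * Ec x)" for x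
        by (simp add: p_def algebra_simps)
      ultimately show ?thesis by simp
    qed
    have Z_bot: "((\<lambda>x. (L4 / 2 - complex_of_real (sqrt km)) * exp (\<i> * complex_of_real (km * x)) + (L3 / 2 - complex_of_real (sqrt km) * r) * exp (- \<i> * complex_of_real (km * x))) \<longlongrightarrow> 0) at_bot"
    proof -
      have a1: "((\<lambda>x. ((L4 - G2 x) / 2) * E x) \<longlongrightarrow> 0) at_bot"
        using L4 by (intro tendsto_zero_mult_unit[OF _ normE]) (auto intro!: tendsto_eq_intros)
      have a2: "((\<lambda>x. ((L3 - G1 x) / 2) * Ec x) \<longlongrightarrow> 0) at_bot"
        using L3 by (intro tendsto_zero_mult_unit[OF _ normEc]) (auto intro!: tendsto_eq_intros)
      have "((\<lambda>x. ((L4 - G2 x) / 2) * E x + ((L3 - G1 x) / 2) * Ec x + (p x - complex_of_real (sqrt km) * (E x + r * Ec x))) \<longlongrightarrow> 0 + 0 + 0) at_bot"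
        by (intro tendsto_add a1 a2 p_bot)
      moreover have "((L4 - G2 x) / 2) * E x + ((L3 - G1 x) / 2) * Ec x + (p x - complex_of_real (sqrt km) * (E x + r * Ec x))
          = (L4 / 2 - complex_of_real (sqrt km)) * exp (\<i> * complex_of_real (km * x)) + (L3 / 2 - complex_of_real (sqrt km) * r) * exp (- \<i> * complex_of_real (km * x))" for x
        unfolding p_eq Ec_eq[symmetric] E_app by (simp add: field_simps)
      ultimately show ?thesis by simp
    qed
    from lin_indep_bot[OF km_pos Z_bot] have L4v: "L4 = 2 * complex_of_real (sqrt km)" and L3v: "L3 = 2 * complex_of_real (sqrt km) * r"
      by auto
    have nG1: "cmod (G1 x) = cmod (\<beta> x)" for x unfolding G1_def by (simp add: norm_mult normE)
    have nG2: "cmod (G2 x) = cmod (\<alpha> x)" for x unfolding G2_def by (simp add: norm_mult normEc)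
    have S_G: "S x = (cmod (G2 x))^2 + (cmod (G1 x))^2" for x
      unfolding nG1 nG2 S_def \<alpha>_def \<beta>_def ab_identities(1) ..
    have D_G: "D x = (cmod (G2 x))^2 - (cmod (G1 x))^2" for x
      unfolding nG1 nG2 D_def \<alpha>_def \<beta>_def ab_identities(2) ..
    have S_top: "(S \<longlongrightarrow> (cmod L2)^2 + (cmod L1)^2) at_top"
      unfolding S_G by (intro tendsto_intros L1 L2)
    have S_botl: "(S \<longlongrightarrow> (cmod L4)^2 + (cmod L3)^2) at_bot"
      unfolding S_G by (intro tendsto_intros L3 L4)
    have D_fun: "D = (\<lambda>x::real. D0)" using D_const by auto
    have "(D \<longlongrightarrow> (cmod L2)^2 - (cmod L1)^2) at_top"
      unfolding D_G by (intro tendsto_intros L1 L2)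
    then have D_top: "((\<lambda>x::real. D0) \<longlongrightarrow> (cmod L2)^2 - (cmod L1)^2) at_top" by (simp only: D_fun)
    have "(D \<longlongrightarrow> (cmod L4)^2 - (cmod L3)^2) at_bot"
      unfolding D_G by (intro tendsto_intros L3 L4)
    then have D_bot: "((\<lambda>x::real. D0) \<longlongrightarrow> (cmod L4)^2 - (cmod L3)^2) at_bot" by (simp only: D_fun)
    have "D0 = (cmod L2)^2 - (cmod L1)^2"
      by (rule tendsto_unique[OF _ tendsto_const D_top]) simp
    then have D0_top: "D0 = 4 * km * (cmod \<tau>)^2"
      using km_pos by (simp add: L1v L2v norm_mult power_mult_distrib)
    have "D0 = (cmod L4)^2 - (cmod L3)^2"
      by (rule tendsto_unique[OF _ tendsto_const D_bot]) simp
    then have D0_bot: "D0 = 4 * km - 4 * km * (cmod r)^2"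
      using km_pos by (simp add: L3v L4v norm_mult power_mult_distrib)
    have S_top': "(S \<longlongrightarrow> D0) at_top"
      using S_top km_pos by (simp add: L1v L2v norm_mult power_mult_distrib D0_top)
    define Sm where "Sm = 4 * km + 4 * km * (cmod r)^2"
    have S_bot': "(S \<longlongrightarrow> Sm) at_bot"
      using S_botl km_pos by (simp add: L3v L4v norm_mult power_mult_distrib Sm_def)
    have "4 * km * (cmod \<tau>)^2 = 4 * km - 4 * km * (cmod r)^2" using D0_top D0_bot by linarith
    then have "(4 * km) * ((cmod \<tau>)^2 - (1 - (cmod r)^2)) = 0" by (simp add: algebra_simps)
    then have rho_t: "(cmod \<tau>)^2 = 1 - (cmod r)^2" using km_pos by simp
    have main_ineq: "Sm + sqrt (Sm^2 - D0^2) \<le> (D0 + sqrt \<epsilon>) * exp I" if eps: "\<epsilon> > 0" for \<epsilon>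
    proof -
      define Rt where "Rt = (\<lambda>x. sqrt ((S x)^2 - D0^2 + \<epsilon>))"
      define g where "g = (\<lambda>x. S x + Rt x)"
      have rad_pos: "(S x)^2 - D0^2 + \<epsilon> > 0" for x using S_ge_D[of x] D_const[of x] eps by simp
      have Rt_pos: "Rt x > 0" for x using rad_pos[of x] by (simp add: Rt_def)
      have g_nonneg: "g x \<ge> 0" for x using S_nonneg[of x] Rt_pos[of x] by (simp add: g_def)
      have gd: "(g has_real_derivative (-4 * V x * R x) * (1 + S x / Rt x)) (at x)" for x
      proof -
        have "((\<lambda>x. (S x)^2 - D0^2 + \<epsilon>) has_real_derivative (2 * S x * (-4 * V x * R x))) (at x)"
          using DERIV_add[OF DERIV_diff[OF DERIV_power[OF Sd[of x], of 2] DERIV_const[of "D0^2"]] DERIV_const[of \<epsilon>]] by (simp add: mult_ac)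
        then have "(Rt has_real_derivative (inverse (sqrt ((S x)^2 - D0^2 + \<epsilon>)) / 2 * (2 * S x * (-4 * V x * R x)))) (at x)"
          unfolding Rt_def using rad_pos[of x] by (intro DERIV_chain2[OF DERIV_real_sqrt]) auto
        then have "(g has_real_derivative (-4 * V x * R x) + inverse (sqrt ((S x)^2 - D0^2 + \<epsilon>)) / 2 * (2 * S x * (-4 * V x * R x))) (at x)"
          unfolding g_def by (intro DERIV_add Sd)
        moreover have "(-4 * V x * R x) + inverse (sqrt ((S x)^2 - D0^2 + \<epsilon>)) / 2 * (2 * S x * (-4 * V x * R x)) = (-4 * V x * R x) * (1 + S x / Rt x)"
          using Rt_pos[of x] by (simp add: Rt_def field_simps)
        ultimately show ?thesis by simp
      qed
      have g_cond: "(-4 * V x * R x) * (1 + S x / Rt x) + \<bar>V x\<bar> * g x \<ge> 0" for x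
      proof -
        have "sqrt ((S x)^2 - (D x)^2) \<le> Rt x" unfolding Rt_def D_const[of x] using eps by simp
        then have "\<bar>V x\<bar> * sqrt ((S x)^2 - (D x)^2) \<le> \<bar>V x\<bar> * Rt x" by (rule mult_left_mono) simp
        then have b1: "-4 * V x * R x + \<bar>V x\<bar> * Rt x \<ge> 0" using Sd_bound[of x] by linarith
        have b2: "1 + S x / Rt x \<ge> 0" using S_nonneg[of x] Rt_pos[of x] by simp
        have "(-4 * V x * R x) * (1 + S x / Rt x) + \<bar>V x\<bar> * g x = (-4 * V x * R x + \<bar>V x\<bar> * Rt x) * (1 + S x / Rt x)"
          using Rt_pos[of x] by (simp add: g_def field_simps)
        then show ?thesis using b1 b2 by simp
      qed
      have g_mono: "g x \<le> g y * exp I" if xy: "x \<le> y" for x y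
      proof -
        have "g x * exp (F x) \<le> g y * exp (F y)" by (rule mono_exp[OF gd Fd g_cond xy])
        then have "g x \<le> g y * exp (F y - F x)" by (simp add: exp_diff field_simps)
        also have "\<dots> \<le> g y * exp I" using F_bound[OF xy] g_nonneg[of y] by (intro mult_left_mono) auto
        finally show ?thesis .
      qed
      have "(g \<longlongrightarrow> D0 + sqrt (D0^2 - D0^2 + \<epsilon>)) at_top"
        unfolding g_def Rt_def by (intro tendsto_intros S_top')
      then have g_top: "((\<lambda>y. g y * exp I) \<longlongrightarrow> (D0 + sqrt \<epsilon>) * exp I) at_top"
        by (intro tendsto_mult tendsto_const) simp
      have gx: "g x \<le> (D0 + sqrt \<epsilon>) * exp I" for x
        by (rule tendsto_le[OF trivial_limit_at_top_linorder g_top tendsto_const])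
           (rule eventually_mono[OF eventually_ge_at_top[of x] g_mono])
      have g_bot: "(g \<longlongrightarrow> Sm + sqrt (Sm^2 - D0^2 + \<epsilon>)) at_bot"
        unfolding g_def Rt_def by (intro tendsto_intros S_bot')
      have "Sm + sqrt (Sm^2 - D0^2 + \<epsilon>) \<le> (D0 + sqrt \<epsilon>) * exp I"
        by (rule tendsto_le[OF trivial_limit_at_bot_linorder tendsto_const g_bot]) (simp add: gx)
      moreover have "sqrt (Sm^2 - D0^2) \<le> sqrt (Sm^2 - D0^2 + \<epsilon>)" using eps by simp
      ultimately show ?thesis by linarith
    qed
    have lim_ineq: "Sm + sqrt (Sm^2 - D0^2) \<le> D0 * exp I"
    proof -
      have "((\<lambda>\<epsilon>. (D0 + sqrt \<epsilon>) * exp I) \<longlongrightarrow> (D0 + sqrt 0) * exp I) (at_right 0)"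
        by (intro tendsto_intros)
      then have lim0: "((\<lambda>\<epsilon>. (D0 + sqrt \<epsilon>) * exp I) \<longlongrightarrow> D0 * exp I) (at_right 0)" by simp
      show ?thesis
        by (rule tendsto_le[OF trivial_limit_at_right_real lim0 tendsto_const])
           (rule eventually_mono[OF eventually_at_right_less[of "0::real"] main_ineq])
    qed
    define \<rho> where "\<rho> = cmod r"
    have rho_nonneg: "\<rho> \<ge> 0" by (simp add: \<rho>_def)
    have Sm_eq: "Sm = 4 * km * (1 + \<rho>^2)" by (simp add: Sm_def \<rho>_def algebra_simps)
    have D0_eq: "D0 = 4 * km * (1 - \<rho>^2)" by (simp add: D0_bot \<rho>_def algebra_simps)
    have "Sm^2 - D0^2 = (8 * km * \<rho>)^2" unfolding Sm_eq D0_eq by (simp add: power2_eq_square algebra_simps)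
    then have sq: "sqrt (Sm^2 - D0^2) = 8 * km * \<rho>" using km_pos rho_nonneg by simp
    have "4 * km * ((1 + \<rho>) * (1 + \<rho>)) \<le> 4 * km * ((1 - \<rho>) * exp I * (1 + \<rho>))"
    proof -
      have "Sm + 8 * km * \<rho> \<le> D0 * exp I" using lim_ineq unfolding sq .
      then show ?thesis unfolding Sm_eq D0_eq by (simp add: algebra_simps power2_eq_square)
    qed
    then have "(1 + \<rho>) * (1 + \<rho>) \<le> ((1 - \<rho>) * exp I) * (1 + \<rho>)" using km_pos by simp
    then have key: "1 + \<rho> \<le> (1 - \<rho>) * exp I" using rho_nonneg
      by (metis mult_le_cancel_right_pos add_pos_nonneg zero_less_one)
    have "transmission kp km \<tau> = 1 - \<rho>^2"
      unfolding transmission_def same using km_pos rho_t by (simp add: \<rho>_def)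
    then show "(sech (I / 2))^2 \<le> transmission kp km \<tau>"
      using final_alg[OF rho_nonneg key] by simp
  qed
qed

end
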